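(* Let $G=(V,E)$ be a finite simple undirected graph, $G_0:=G$, and let $W_1,\dots,W_r$ be distinct subsets of $V$ such that for every $t\in\{1,\dots,r\}$, $W_t$ is a clique of $G_{t-1}$ with $|W_t|\ge2$ and $G_t:=G_{t-1}\mid W_t$. Let $W_{r+1}\subseteq V$ be a clique of $G_r$. For $t=r,r-1,\dots,1$ define recursively $P_t:=\{x\in STAB(G_{t-1})\mid x_{W_t}=0\}$ and \[ \lambda^B_t:=\max\Big\{x_{W_{r+1}}+\sum_{i=t+1}^r\lambda^B_i(x_{W_i}-1)\ \Big|\ x\in P_t\Big\}-1 . \] Then the inequality \[ x_{W_{r+1}}+\sum_{t=1}^r\lambda^B_t(x_{W_t}-1)\le 1 \] is valid for $STAB(G)$.
   Context: For a graph $G=(V,E)$, $\mathcal S(G)\subseteq\{0,1\}^V$ is the set of characteristic vectors of stable sets of $G$, and $STAB(G)=\mathrm{conv}\,\mathcal S(G)$. For $W\subseteq V$ and $x\in\mathbb R^V$, $x_W=\sum_{v\in W}x_v$. $N(v)$ is the neighborhood of $v$. The clique projection of a clique $W$ ($|W|\ge2$) of a graph $H=(V,E_H)$ is $H\mid W=(V,E_H\cup\{uv\notin E_H\mid u\ne v,\ W\subseteq N_H(u)\cup N_H(v)\})$. An inequality is valid for a set if every point of the set satisfies it. *)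

theory Defs
  imports Main "HOL-Library.Indicator_Function"
begin

definition simple_graph :: "'a set \<Rightarrow> 'a set set \<Rightarrow> bool" where
  "simple_graph V E \<longleftrightarrow> finite V \<and>
     (\<forall>e\<in>E. \<exists>u v. e = {u, v} \<and> u \<noteq> v \<and> u \<in> V \<and> v \<in> V)"

definition nbhd :: "'a set set \<Rightarrow> 'a \<Rightarrow> 'a set" where
  "nbhd E v = {u. {u, v} \<in> E}"

definition is_clique :: "'a set \<Rightarrow> 'a set set \<Rightarrow> 'a set \<Rightarrow> bool" where
  "is_clique V E W \<longleftrightarrow> W \<subseteq> V \<and> (\<forall>u\<in>W. \<forall>v\<in>W. u \<noteq> v \<longrightarrow> {u, v} \<in> E)"

definition is_stable :: "'a set \<Rightarrow> 'a set set \<Rightarrow> 'a set \<Rightarrow> bool" where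
  "is_stable V E S \<longleftrightarrow> S \<subseteq> V \<and> (\<forall>u\<in>S. \<forall>v\<in>S. {u, v} \<notin> E)"

definition clique_proj :: "'a set \<Rightarrow> 'a set set \<Rightarrow> 'a set \<Rightarrow> 'a set set" where
  "clique_proj V E W = E \<union> {{u, v} | u v. u \<in> V \<and> v \<in> V \<and> u \<noteq> v \<and> {u, v} \<notin> E \<and>
                                         W \<subseteq> nbhd E u \<union> nbhd E v}"

definition xsum :: "('a \<Rightarrow> real) \<Rightarrow> 'a set \<Rightarrow> real" where
  "xsum x W = (\<Sum>v\<in>W. x v)"

definition STAB :: "'a set \<Rightarrow> 'a set set \<Rightarrow> ('a \<Rightarrow> real) set" where
  "STAB V E = {x. \<exists>\<mu> :: 'a set \<Rightarrow> real.
      (\<forall>S. \<mu> S \<ge> 0) \<and> (\<Sum>S\<in>{S. is_stable V E S}. \<mu> S) = 1 \<and>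
      (\<forall>v. x v = (\<Sum>S\<in>{S. is_stable V E S}. \<mu> S * indicator S v))}"

primrec gseq :: "'a set \<Rightarrow> 'a set set \<Rightarrow> (nat \<Rightarrow> 'a set) \<Rightarrow> nat \<Rightarrow> 'a set set" where
  "gseq V E W 0 = E"
| "gseq V E W (Suc t) = clique_proj V (gseq V E W t) (W (Suc t))"

definition Ppoly :: "'a set \<Rightarrow> 'a set set \<Rightarrow> (nat \<Rightarrow> 'a set) \<Rightarrow> nat \<Rightarrow> ('a \<Rightarrow> real) set" where
  "Ppoly V E W t = {x \<in> STAB V (gseq V E W (t - 1)). xsum x (W t) = 0}"

(* lamvec V E W r k defines lambda^B_t for t = r, r-1, ..., r-k+1 (recursion downwards).
   The max is written as a Sup; it is attained (P_t is a nonempty polytope). *)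
primrec lamvec :: "'a set \<Rightarrow> 'a set set \<Rightarrow> (nat \<Rightarrow> 'a set) \<Rightarrow> nat \<Rightarrow> nat \<Rightarrow> nat \<Rightarrow> real" where
  "lamvec V E W r 0 = (\<lambda>i. 0)"
| "lamvec V E W r (Suc k) =
     (let t = r - k; L = lamvec V E W r k in
      L(t := (SUP x\<in>Ppoly V E W t.
                 xsum x (W (Suc r)) + (\<Sum>i\<in>{t+1..r}. L i * (xsum x (W i) - 1))) - 1))"

definition lamB :: "'a set \<Rightarrow> 'a set set \<Rightarrow> (nat \<Rightarrow> 'a set) \<Rightarrow> nat \<Rightarrow> nat \<Rightarrow> real" where
  "lamB V E W r t = lamvec V E W r r t"

end

theory Submission
  imports Defs
begin

lemma lamvec_stable: "r - k < i \<Longrightarrow> lamvec V E W r (k + j) i = lamvec V E W r k i"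
  by (induction j) (auto simp: Let_def)

lemma lamB_rec:
  assumes "1 \<le> t" "t \<le> r"
  shows "lamB V E W r t = (SUP x\<in>Ppoly V E W t. xsum x (W (Suc r)) +
            (\<Sum>i\<in>{t+1..r}. lamB V E W r i * (xsum x (W i) - 1))) - 1"
proof -
  have e: "r = Suc (r-t) + (t-1)" using assms by simp
  have 1: "lamB V E W r t = lamvec V E W r (Suc (r-t)) t"
    unfolding lamB_def using lamvec_stable[where r=r and k="Suc(r-t)" and i=t and j="t-1" and V=V and E=E and W=W] e assms by simp
  have rt: "r - (r - t) = t" using assms by simp
  have 2: "lamvec V E W r (Suc (r-t)) t = (SUP x\<in>Ppoly V E W t. xsum x (W (Suc r)) +
            (\<Sum>i\<in>{t+1..r}. lamvec V E W r (r-t) i * (xsum x (W i) - 1))) - 1"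
    by (simp add: Let_def rt)
  have 3: "lamvec V E W r (r-t) i = lamB V E W r i" if "i \<in> {t+1..r}" for i
  proof -
    have a: "r = (r - t) + t" using assms by simp
    have b: "r - (r - t) < i" using that assms by auto
    show ?thesis unfolding lamB_def using lamvec_stable[where r=r and k="r-t" and i=i and j=t and V=V and E=E and W=W, OF b] a
      by metis
  qed
  show ?thesis unfolding 1 2 using 3 by (auto intro!: SUP_cong sum.cong)
qed

lemma xsum_comb:
  assumes "finite T" "\<forall>v. x v = (\<Sum>S\<in>T. \<mu> S * indicator S v)"
  shows "xsum x A = (\<Sum>S\<in>T. \<mu> S * xsum (indicator S) A)"
  unfolding xsum_def using assms by (simp add: sum_distrib_left sum.swap[of _ A T])

lemma F_comb:
  assumes "finite T" "sum \<mu> T = 1" "\<forall>v. x v = (\<Sum>S\<in>T. \<mu> S * indicator S v)"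
  shows "xsum x A + (\<Sum>i\<in>I. a i * (xsum x (B i) - 1)) =
    (\<Sum>S\<in>T. \<mu> S * (xsum (indicator S) A + (\<Sum>i\<in>I. a i * (xsum (indicator S) (B i) - 1))))"
proof -
  have "(\<Sum>S\<in>T. \<mu> S * (\<Sum>i\<in>I. a i * (xsum (indicator S) (B i) - 1)))
     = (\<Sum>i\<in>I. a i * ((\<Sum>S\<in>T. \<mu> S * xsum (indicator S) (B i)) - (\<Sum>S\<in>T. \<mu> S)))"
    by (simp add: sum_distrib_left sum_subtractf right_diff_distrib sum.swap[of _ I T] algebra_simps)
  also have "\<dots> = (\<Sum>i\<in>I. a i * (xsum x (B i) - 1))"
    using xsum_comb[OF assms(1,3)] assms(2) by simp
  finally show ?thesis
    using xsum_comb[OF assms(1,3)] by (simp add: distrib_left sum.distrib)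
qed

lemma finite_stable: "finite V \<Longrightarrow> finite {S. is_stable V E' S}"
  unfolding is_stable_def by (rule finite_subset[of _ "Pow V"]) auto

lemma stab_bound:
  assumes "finite V" "x \<in> STAB V E'"
  shows "xsum x A + (\<Sum>i\<in>I. a i * (xsum x (B i) - 1)) \<le>
    (\<Sum>S\<in>{S. is_stable V E' S}. \<bar>xsum (indicator S) A + (\<Sum>i\<in>I. a i * (xsum (indicator S) (B i) - 1))\<bar>)"
    (is "_ \<le> ?M")
proof -
  let ?T = "{S. is_stable V E' S}"
  obtain \<mu> where m: "\<forall>S. \<mu> S \<ge> 0" "sum \<mu> ?T = 1" "\<forall>v. x v = (\<Sum>S\<in>?T. \<mu> S * indicator S v)"
    using assms(2) unfolding STAB_def by blast
  have fT: "finite ?T" using finite_stable[OF assms(1)] .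
  have "xsum x A + (\<Sum>i\<in>I. a i * (xsum x (B i) - 1)) =
    (\<Sum>S\<in>?T. \<mu> S * (xsum (indicator S) A + (\<Sum>i\<in>I. a i * (xsum (indicator S) (B i) - 1))))"
    by (rule F_comb[OF fT m(2,3)])
  also have "\<dots> \<le> (\<Sum>S\<in>?T. \<mu> S * ?M)"
  proof (rule sum_mono, rule mult_left_mono)
    fix S assume "S \<in> ?T"
    then show "xsum (indicator S) A + (\<Sum>i\<in>I. a i * (xsum (indicator S) (B i) - 1)) \<le> ?M"
      using member_le_sum[OF _ _ fT, of S "\<lambda>S. \<bar>xsum (indicator S) A + (\<Sum>i\<in>I. a i * (xsum (indicator S) (B i) - 1))\<bar>"]
      by (meson abs_ge_self abs_ge_zero order_trans)
  qed (use m in auto)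
  also have "\<dots> = ?M" using m(2) by (simp add: sum_distrib_right[symmetric])
  finally show ?thesis .
qed

lemma stab_valid:
  assumes "finite V" "x \<in> STAB V E'"
    and "\<And>S. is_stable V E' S \<Longrightarrow> xsum (indicator S) A + (\<Sum>i\<in>I. a i * (xsum (indicator S) (B i) - 1)) \<le> 1"
  shows "xsum x A + (\<Sum>i\<in>I. a i * (xsum x (B i) - 1)) \<le> 1"
proof -
  let ?T = "{S. is_stable V E' S}"
  obtain \<mu> where m: "\<forall>S. \<mu> S \<ge> 0" "sum \<mu> ?T = 1" "\<forall>v. x v = (\<Sum>S\<in>?T. \<mu> S * indicator S v)"
    using assms(2) unfolding STAB_def by blast
  have fT: "finite ?T" using finite_stable[OF assms(1)] .
  have "xsum x A + (\<Sum>i\<in>I. a i * (xsum x (B i) - 1)) =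
    (\<Sum>S\<in>?T. \<mu> S * (xsum (indicator S) A + (\<Sum>i\<in>I. a i * (xsum (indicator S) (B i) - 1))))"
    by (rule F_comb[OF fT m(2,3)])
  also have "\<dots> \<le> (\<Sum>S\<in>?T. \<mu> S * 1)"
    by (rule sum_mono, rule mult_left_mono) (use m assms(3) in auto)
  also have "\<dots> = 1" using m(2) by simp
  finally show ?thesis .
qed

lemma stable_in_STAB: "is_stable V E' S \<Longrightarrow> finite V \<Longrightarrow> indicator S \<in> STAB V E'"
  unfolding STAB_def
proof (intro CollectI exI[of _ "\<lambda>T. if T = S then 1 else 0"] conjI allI)
  assume "is_stable V E' S" "finite V"
  then show "(\<Sum>T\<in>{S. is_stable V E' S}. if T = S then 1 else 0) = (1::real)"
    using finite_stable[of V E'] by (simp add: sum.delta)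
  fix v
  have "(\<Sum>T\<in>{S. is_stable V E' S}. (if T = S then 1 else 0) * indicator T v)
     = (\<Sum>T\<in>{S. is_stable V E' S}. if T = S then indicator S v else (0::real))"
    by (rule sum.cong) auto
  then show "(indicator S v::real) = (\<Sum>T\<in>{S. is_stable V E' S}. (if T = S then 1 else 0) * indicator T v)"
    using \<open>is_stable V E' S\<close> finite_stable[OF \<open>finite V\<close>, of E'] by (simp add: sum.delta)
qed auto

lemma xsum_ind: "finite A \<Longrightarrow> xsum (indicator S) A = real (card (A \<inter> S))"
  unfolding xsum_def using sum_mult_indicator[of A "\<lambda>_. 1::real" S] by simp

lemma clique_stable_card:
  assumes "is_clique V E' W" "is_stable V E' S" "finite W"
  shows "card (W \<inter> S) \<le> 1"
proof -
  have "\<forall>u\<in>W \<inter> S. \<forall>v\<in>W \<inter> S. u = v" using assms unfolding is_clique_def is_stable_def by blast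
  then have "card (W \<inter> S) \<le> Suc 0" using card_le_Suc0_iff_eq[OF finite_Int[OF disjI1[OF assms(3)]]] by blast
  then show ?thesis by simp
qed

lemma stable_proj:
  assumes "is_stable V E' S" "w \<in> W' \<inter> S"
  shows "is_stable V (clique_proj V E' W') S"
  unfolding is_stable_def
proof (intro conjI ballI)
  show "S \<subseteq> V" using assms(1) unfolding is_stable_def by blast
  fix u v assume uv: "u \<in> S" "v \<in> S"
  have st: "\<forall>a\<in>S. \<forall>b\<in>S. {a, b} \<notin> E'" using assms(1) unfolding is_stable_def by blast
  have wS: "w \<in> S" "w \<in> W'" using assms(2) by auto
  show "{u, v} \<notin> clique_proj V E' W'"
  proof
    assume "{u, v} \<in> clique_proj V E' W'"
    then obtain a b where ab: "{u,v} = {a,b}" "W' \<subseteq> nbhd E' a \<union> nbhd E' b"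
      using st uv unfolding clique_proj_def by blast
    then have "a \<in> S" "b \<in> S" using uv by (auto simp: doubleton_eq_iff)
    moreover have "w \<in> nbhd E' a \<or> w \<in> nbhd E' b" using ab wS by blast
    ultimately show False using st wS unfolding nbhd_def by blast
  qed
qed

theorem lemma4:
  fixes V :: "'a set" and E :: "'a set set" and W :: "nat \<Rightarrow> 'a set" and r :: nat
  assumes "simple_graph V E"
    and "inj_on W {1..r}"
    and "\<forall>t\<in>{1..r}. is_clique V (gseq V E W (t - 1)) (W t) \<and> card (W t) \<ge> 2"
    and "is_clique V (gseq V E W r) (W (Suc r))"
  shows "\<forall>x\<in>STAB V E.
           xsum x (W (Suc r)) + (\<Sum>t\<in>{1..r}. lamB V E W r t * (xsum x (W t) - 1)) \<le> 1"
proof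
  have fV: "finite V" using assms(1) unfolding simple_graph_def by blast
  define lam where "lam = lamB V E W r"
  define F where "F t x = xsum x (W (Suc r)) + (\<Sum>i\<in>{t+1..r}. lam i * (xsum x (W i) - 1))" for t x
  have fW: "finite (W i)" if "i \<in> {1..Suc r}" for i
  proof (cases "i = Suc r")
    case True then show ?thesis using assms(4) fV finite_subset unfolding is_clique_def by metis
  next
    case False then have "i \<in> {1..r}" using that by auto
    then show ?thesis using assms(3) fV finite_subset unfolding is_clique_def by metis
  qed
  have claim: "\<forall>S. is_stable V (gseq V E W (r-n)) S \<longrightarrow> F (r-n) (indicator S) \<le> 1" if "n \<le> r" for n
    using that
  proof (induction n)
    case 0
    show ?case
    proof (intro allI impI)
      fix S assume S: "is_stable V (gseq V E W (r-0)) S"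
      have "card (W (Suc r) \<inter> S) \<le> 1"
        using clique_stable_card[OF assms(4)] S fW[of "Suc r"] by simp
      then show "F (r-0) (indicator S) \<le> 1"
        unfolding F_def using xsum_ind[OF fW[of "Suc r"], of S] by simp
    qed
  next
    case (Suc n)
    define t where "t = r - n"
    have t1: "1 \<le> t" "t \<le> r" using Suc.prems unfolding t_def by auto
    have IH: "\<forall>S. is_stable V (gseq V E W t) S \<longrightarrow> F t (indicator S) \<le> 1"
      using Suc t_def by auto
    have rs: "r - Suc n = t - 1" unfolding t_def by simp
    show ?case unfolding rs
    proof (intro allI impI)
      fix S assume S: "is_stable V (gseq V E W (t-1)) S"
      let ?x = "indicator S :: 'a \<Rightarrow> real"
      have split: "{t - 1 + 1..r} = insert t {t+1..r}" using t1 by auto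
      have Fe: "F (t-1) ?x = F t ?x + lam t * (xsum ?x (W t) - 1)"
        unfolding F_def split by simp
      have tin: "t \<in> {1..r}" using t1 by auto
      have fWt: "finite (W t)" using fW t1 by auto
      have "card (W t \<inter> S) \<le> 1"
        using clique_stable_card[of V _ "W t" S] assms(3) tin S fWt by blast
      then consider "card (W t \<inter> S) = 0" | "card (W t \<inter> S) = 1" by linarith
      then show "F (t-1) ?x \<le> 1"
      proof cases
        case 1
        have xs0: "xsum ?x (W t) = 0" using xsum_ind[OF fWt, of S] 1 by simp
        have inP: "?x \<in> Ppoly V E W t"
          unfolding Ppoly_def using stable_in_STAB[OF S fV] xs0 by simp
        have bdd: "bdd_above (F t ` Ppoly V E W t)"
        proof (rule bdd_aboveI2)
          fix y assume "y \<in> Ppoly V E W t"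
          then have "y \<in> STAB V (gseq V E W (t-1))" unfolding Ppoly_def by simp
          then show "F t y \<le> (\<Sum>S\<in>{S. is_stable V (gseq V E W (t-1)) S}. \<bar>F t (indicator S)\<bar>)"
            unfolding F_def by (rule stab_bound[OF fV])
        qed
        have "F t ?x \<le> (SUP y\<in>Ppoly V E W t. F t y)" by (rule cSUP_upper[OF inP bdd])
        moreover have "lam t = (SUP y\<in>Ppoly V E W t. F t y) - 1"
          unfolding lam_def F_def using lamB_rec[OF t1] by (simp add: lam_def)
        ultimately show ?thesis using Fe xs0 by simp
      next
        case 2
        then obtain w where "w \<in> W t \<inter> S" by (metis card_1_singletonE insertI1)
        then have "is_stable V (clique_proj V (gseq V E W (t-1)) (W t)) S"
          by (rule stable_proj[OF S])
        moreover have "gseq V E W t = clique_proj V (gseq V E W (t-1)) (W t)"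
          using t1 by (metis Suc_diff_1 gseq.simps(2) less_le_trans zero_less_one)
        ultimately have "F t ?x \<le> 1" using IH by simp
        moreover have "xsum ?x (W t) = 1" using xsum_ind[OF fWt, of S] 2 by simp
        ultimately show ?thesis using Fe by simp
      qed
    qed
  qed
  fix x assume x: "x \<in> STAB V E"
  have "F 0 x \<le> 1"
    unfolding F_def
  proof (rule stab_valid[OF fV, of x "gseq V E W 0"])
    show "x \<in> STAB V (gseq V E W 0)" using x by simp
    fix S assume "is_stable V (gseq V E W 0) S"
    then show "xsum (indicator S) (W (Suc r)) + (\<Sum>i\<in>{0 + 1..r}. lam i * (xsum (indicator S) (W i) - 1)) \<le> 1"
      using claim[of r] unfolding F_def by simp
  qed
  then show "xsum x (W (Suc r)) + (\<Sum>t\<in>{1..r}. lamB V E W r t * (xsum x (W t) - 1)) \<le> 1"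
    unfolding F_def lam_def by simp
qed

end
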